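(* Let $H$ be a connected graph of order $m\ge 3$. (a) If $\textnormal{diam}(H)=1$, then $O_{\rm SR}(K_1\odot H)=\mathcal{B}$. (b) If $\textnormal{diam}(H)=2$, then $O_{\rm SR}(K_1\odot H)\in\{\mathcal{M},\mathcal{N},\mathcal{B}\}$. (c) If $\textnormal{diam}(H)=3$, then $O_{\rm SR}(K_1\odot H)\in\{\mathcal{N},\mathcal{B}\}$. (d) If $\textnormal{diam}(H)\ge 4$, then $O_{\rm SR}(K_1\odot H)=\mathcal{B}$.
   Context: All graphs are finite, simple and undirected; $\textnormal{diam}$ denotes diameter. $K_1\odot H$ (the corona product of $K_1$ with $H$) is the graph obtained from $H$ by adding one new vertex adjacent to every vertex of $H$. A set $S\subseteq V(X)$ is a strong resolving set of a connected graph $X$ if for all distinct $x,y\in V(X)$ there exists $z\in S$ such that $x$ lies on a $y$–$z$ geodesic or $y$ lies on an $x$–$z$ geodesic. The Maker–Breaker strong resolving game on $X$: Maker and Breaker alternately select a not-yet-chosen vertex of $X$; Maker wins if the vertices he selects contain a strong resolving set of $X$, Breaker wins otherwise. In the M-game Maker moves first, in the B-game Breaker moves first. $O_{\rm SR}(X)=\mathcal{M}$ if Maker has a winning strategy in both games, $\mathcal{B}$ if Breaker has a winning strategy in both, and $\mathcal{N}$ if the first player has a winning strategy in each. *)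

theory Defs
  imports Main
begin

definition simple_graph :: "'a set \<Rightarrow> ('a \<Rightarrow> 'a \<Rightarrow> bool) \<Rightarrow> bool" where
  "simple_graph V E \<longleftrightarrow> finite V \<and>
     (\<forall>x y. E x y \<longrightarrow> x \<in> V \<and> y \<in> V \<and> x \<noteq> y \<and> E y x)"

fun walk :: "('a \<Rightarrow> 'a \<Rightarrow> bool) \<Rightarrow> 'a \<Rightarrow> 'a \<Rightarrow> nat \<Rightarrow> bool" where
  "walk E x y 0 \<longleftrightarrow> x = y"
| "walk E x y (Suc n) \<longleftrightarrow> (\<exists>z. E x z \<and> walk E z y n)"

definition connected_graph :: "'a set \<Rightarrow> ('a \<Rightarrow> 'a \<Rightarrow> bool) \<Rightarrow> bool" where
  "connected_graph V E \<longleftrightarrow> simple_graph V E \<and> V \<noteq> {} \<and>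
     (\<forall>x\<in>V. \<forall>y\<in>V. \<exists>n. walk E x y n)"

definition gdist :: "('a \<Rightarrow> 'a \<Rightarrow> bool) \<Rightarrow> 'a \<Rightarrow> 'a \<Rightarrow> nat" where
  "gdist E x y = (LEAST n. walk E x y n)"

definition diam :: "'a set \<Rightarrow> ('a \<Rightarrow> 'a \<Rightarrow> bool) \<Rightarrow> nat" where
  "diam V E = Max {gdist E x y | x y. x \<in> V \<and> y \<in> V}"

definition on_geodesic :: "('a \<Rightarrow> 'a \<Rightarrow> bool) \<Rightarrow> 'a \<Rightarrow> 'a \<Rightarrow> 'a \<Rightarrow> bool" where
  "on_geodesic E y x z \<longleftrightarrow> gdist E y x + gdist E x z = gdist E y z"

definition strong_resolving :: "'a set \<Rightarrow> ('a \<Rightarrow> 'a \<Rightarrow> bool) \<Rightarrow> 'a set \<Rightarrow> bool" where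
  "strong_resolving V E S \<longleftrightarrow> S \<subseteq> V \<and>
     (\<forall>x\<in>V. \<forall>y\<in>V. x \<noteq> y \<longrightarrow>
        (\<exists>z\<in>S. on_geodesic E y x z \<or> on_geodesic E x y z))"

text \<open>Maker-Breaker game on a finite board V with Maker's winning family given by
  the predicate W (on Maker's set).  mb_maker_wins V W Ms Bs t: from the position
  where Maker has chosen Ms, Breaker has chosen Bs, and it is Maker's turn iff t,
  Maker has a winning strategy.  The game is played until all vertices are chosen.\<close>
inductive mb_maker_wins :: "'a set \<Rightarrow> ('a set \<Rightarrow> bool) \<Rightarrow> 'a set \<Rightarrow> 'a set \<Rightarrow> bool \<Rightarrow> bool"
  for V W where
  finish: "V - Ms - Bs = {} \<Longrightarrow> W Ms \<Longrightarrow> mb_maker_wins V W Ms Bs t"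
| maker_move: "x \<in> V - Ms - Bs \<Longrightarrow> mb_maker_wins V W (insert x Ms) Bs False
      \<Longrightarrow> mb_maker_wins V W Ms Bs True"
| breaker_move: "V - Ms - Bs \<noteq> {} \<Longrightarrow>
      (\<forall>x\<in>V - Ms - Bs. mb_maker_wins V W Ms (insert x Bs) True)
      \<Longrightarrow> mb_maker_wins V W Ms Bs False"

definition sr_win :: "'a set \<Rightarrow> ('a \<Rightarrow> 'a \<Rightarrow> bool) \<Rightarrow> 'a set \<Rightarrow> bool" where
  "sr_win V E Ms \<longleftrightarrow> (\<exists>S\<subseteq>Ms. strong_resolving V E S)"

datatype outcome = Out_M | Out_B | Out_N | Out_P

text \<open>Outcome: M-game = Maker first, B-game = Breaker first. Breaker wins iff Maker
  has no winning strategy (finite games are determined).  Out_P (second player wins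
  both) is listed only for totality of the definition.\<close>
definition O_SR :: "'a set \<Rightarrow> ('a \<Rightarrow> 'a \<Rightarrow> bool) \<Rightarrow> outcome" where
  "O_SR V E =
    (let mg = mb_maker_wins V (sr_win V E) {} {} True;
         bg = mb_maker_wins V (sr_win V E) {} {} False
     in if mg \<and> bg then Out_M
        else if \<not> mg \<and> \<not> bg then Out_B
        else if mg \<and> \<not> bg then Out_N
        else Out_P)"

text \<open>Corona K1 \<odot> H: new vertex None adjacent to all Some v, v \<in> V.\<close>
definition corona_V :: "'a set \<Rightarrow> 'a option set" where
  "corona_V V = insert None (Some ` V)"

fun corona_E :: "'a set \<Rightarrow> ('a \<Rightarrow> 'a \<Rightarrow> bool) \<Rightarrow> 'a option \<Rightarrow> 'a option \<Rightarrow> bool" where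
  "corona_E V E (Some u) (Some v) = E u v"
| "corona_E V E None (Some v) = (v \<in> V)"
| "corona_E V E (Some u) None = (u \<in> V)"
| "corona_E V E None None = False"

end

theory Submission
  imports Defs
begin

definition bad :: "('a set \<Rightarrow> bool) \<Rightarrow> 'a \<Rightarrow> 'a \<Rightarrow> bool" where
  "bad W a b \<longleftrightarrow> (\<forall>M. W M \<longrightarrow> a \<in> M \<or> b \<in> M)"

lemma L1: "mb_maker_wins V W Ms Bs t \<Longrightarrow> a \<in> Bs \<Longrightarrow> b \<in> Bs \<Longrightarrow> a \<notin> Ms \<Longrightarrow> b \<notin> Ms \<Longrightarrow> bad W a b \<Longrightarrow> False"
  by (induction rule: mb_maker_wins.induct) (auto simp: bad_def)

lemma L2: "mb_maker_wins V W Ms Bs False \<Longrightarrow> a \<in> Bs \<Longrightarrow> a \<notin> Ms \<Longrightarrow> b \<in> V - Ms - Bs \<Longrightarrow> bad W a b \<Longrightarrow> False"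
  by (erule mb_maker_wins.cases) (auto intro: L1)

lemma L3: "mb_maker_wins V W Ms Bs True \<Longrightarrow> a \<in> Bs \<Longrightarrow> a \<notin> Ms \<Longrightarrow> b1 \<in> V - Ms - Bs \<Longrightarrow> b2 \<in> V - Ms - Bs
   \<Longrightarrow> b1 \<noteq> b2 \<Longrightarrow> bad W a b1 \<Longrightarrow> bad W a b2 \<Longrightarrow> False"
  apply (erule mb_maker_wins.cases)
  apply auto[1]
  subgoal for x Ms' Bs'
    apply (cases "x = b1")
    using L2[of V W "insert x Ms" Bs a b2] apply auto[1]
    using L2[of V W "insert x Ms" Bs a b1] apply auto[1]
    done
  apply auto
  done

lemma L4: "mb_maker_wins V W Ms Bs False \<Longrightarrow> a \<in> V - Ms - Bs \<Longrightarrow> b1 \<in> V - Ms - Bs \<Longrightarrow> b2 \<in> V - Ms - Bs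
   \<Longrightarrow> b1 \<noteq> b2 \<Longrightarrow> a \<noteq> b1 \<Longrightarrow> a \<noteq> b2 \<Longrightarrow> bad W a b1 \<Longrightarrow> bad W a b2 \<Longrightarrow> False"
  apply (erule mb_maker_wins.cases)
  apply auto[2]
  subgoal
    using L3[of V W Ms "insert a Bs" a b1 b2] by auto
  done

lemma L5: "mb_maker_wins V W Ms Bs True \<Longrightarrow> V - Ms - Bs \<noteq> {} \<Longrightarrow>
   (\<And>w. w \<in> V - Ms - Bs \<Longrightarrow> \<exists>a b1 b2. a \<in> V - Ms - Bs - {w} \<and> b1 \<in> V - Ms - Bs - {w} \<and> b2 \<in> V - Ms - Bs - {w}
      \<and> b1 \<noteq> b2 \<and> a \<noteq> b1 \<and> a \<noteq> b2 \<and> bad W a b1 \<and> bad W a b2) \<Longrightarrow> False"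
proof (erule mb_maker_wins.cases)
  fix x Ms' Bs'
  assume h: "\<And>w. w \<in> V - Ms - Bs \<Longrightarrow> \<exists>a b1 b2. a \<in> V - Ms - Bs - {w} \<and> b1 \<in> V - Ms - Bs - {w} \<and> b2 \<in> V - Ms - Bs - {w}
      \<and> b1 \<noteq> b2 \<and> a \<noteq> b1 \<and> a \<noteq> b2 \<and> bad W a b1 \<and> bad W a b2"
    and e: "Ms = Ms'" "Bs = Bs'" and x: "x \<in> V - Ms' - Bs'" and w: "mb_maker_wins V W (insert x Ms') Bs' False"
  from h[of x] x e obtain a b1 b2 where "a \<in> V - Ms - Bs - {x} \<and> b1 \<in> V - Ms - Bs - {x} \<and> b2 \<in> V - Ms - Bs - {x}
      \<and> b1 \<noteq> b2 \<and> a \<noteq> b1 \<and> a \<noteq> b2 \<and> bad W a b1 \<and> bad W a b2" by blast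
  then show False using L4[of V W "insert x Ms" Bs a b1 b2] w e by auto
qed auto

lemma empty_win: "mb_maker_wins V W Ms Bs t \<Longrightarrow> V - Ms - Bs = {} \<Longrightarrow> W Ms"
  by (erule mb_maker_wins.cases) auto

lemma mono_win:
  assumes "mb_maker_wins V W Ms Bs t" and mono: "\<And>A B. W A \<Longrightarrow> A \<subseteq> B \<Longrightarrow> W B"
  shows "D \<subseteq> V - Ms - Bs \<Longrightarrow> mb_maker_wins V W (Ms \<union> D) Bs t"
  using assms(1)
proof (induction arbitrary: D rule: mb_maker_wins.induct)
  case (finish Ms Bs t)
  then have "D = {}" by auto
  then show ?case using finish by (auto intro: mb_maker_wins.finish)
next
  case (maker_move y Ms Bs)
  show ?case
  proof (cases "y \<in> D")
    case False
    have "mb_maker_wins V W (insert y Ms \<union> D) Bs False"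
      using maker_move.hyps(1) maker_move.prems False by (intro maker_move.IH) blast
    moreover have "y \<in> V - (Ms \<union> D) - Bs" using maker_move.hyps(1) False by blast
    ultimately show ?thesis by (intro mb_maker_wins.maker_move[of y]) simp_all
  next
    case True
    show ?thesis
    proof (cases "V - (Ms \<union> D) - Bs = {}")
      case emp: True
      have "mb_maker_wins V W (insert y Ms \<union> (D - {y})) Bs False"
        using maker_move.hyps(1) maker_move.prems by (intro maker_move.IH) blast
      moreover have "insert y Ms \<union> (D - {y}) = Ms \<union> D" using True by auto
      ultimately have "W (Ms \<union> D)" using emp empty_win by metis
      then show ?thesis using emp by (intro mb_maker_wins.finish)
    next
      case ne: False
      then obtain z where z: "z \<in> V - (Ms \<union> D) - Bs" by auto
      have "mb_maker_wins V W (insert y Ms \<union> (insert z (D - {y}))) Bs False"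
        using maker_move.hyps(1) maker_move.prems z True by (intro maker_move.IH) blast
      moreover have "insert y Ms \<union> (insert z (D - {y})) = insert z (Ms \<union> D)" using True by auto
      ultimately have "mb_maker_wins V W (insert z (Ms \<union> D)) Bs False" by simp
      then show ?thesis using z by (rule mb_maker_wins.maker_move[of z, rotated])
    qed
  qed
next
  case (breaker_move Ms Bs)
  show ?case
  proof (cases "V - (Ms \<union> D) - Bs = {}")
    case emp: True
    then have "D = V - Ms - Bs" using breaker_move.prems by blast
    then obtain z where z: "z \<in> D" using breaker_move.hyps(1) by blast
    have "mb_maker_wins V W (Ms \<union> (D - {z})) (insert z Bs) True"
      proof -
      have zf: "z \<in> V - Ms - Bs" using breaker_move.prems z by blast
      have sub: "D - {z} \<subseteq> V - Ms - insert z Bs" using breaker_move.prems by blast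
      show ?thesis using conjunct2[OF bspec[OF breaker_move.IH zf]] sub by blast
    qed
    then have "W (Ms \<union> (D - {z}))" using emp z by (elim empty_win) auto
    then have "W (Ms \<union> D)" by (rule mono) auto
    then show ?thesis using emp by (intro mb_maker_wins.finish)
  next
    case ne: False
    show ?thesis
    proof (rule mb_maker_wins.breaker_move)
      show "V - (Ms \<union> D) - Bs \<noteq> {}" by fact
      show "\<forall>x\<in>V - (Ms \<union> D) - Bs. mb_maker_wins V W (Ms \<union> D) (insert x Bs) True"
        proof
        fix x assume x: "x \<in> V - (Ms \<union> D) - Bs"
        have zf: "x \<in> V - Ms - Bs" using x by blast
        have sub: "D \<subseteq> V - Ms - insert x Bs" using breaker_move.prems x by blast
        show "mb_maker_wins V W (Ms \<union> D) (insert x Bs) True"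
          using conjunct2[OF bspec[OF breaker_move.IH zf]] sub by blast
      qed
    qed
  qed
qed


lemma walk_append: "walk E x z a \<Longrightarrow> walk E z y b \<Longrightarrow> walk E x y (a+b)"
  by (induction a arbitrary: x) auto

lemma walk_split: "walk E x y (a+b) \<Longrightarrow> \<exists>z. walk E x z a \<and> walk E z y b"
proof (induction a arbitrary: x)
  case 0 then show ?case by simp
next
  case (Suc a)
  then obtain w where "E x w" "walk E w y (a+b)" by auto
  with Suc.IH obtain z where "walk E w z a" "walk E z y b" by blast
  then show ?case using \<open>E x w\<close> by auto
qed

lemma gdist_le: "walk E x y n \<Longrightarrow> gdist E x y \<le> n"
  unfolding gdist_def by (rule Least_le)

lemma gdist_walk: "walk E x y n \<Longrightarrow> walk E x y (gdist E x y)"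
  unfolding gdist_def by (rule LeastI)

lemma walk_in_V: "simple_graph V E \<Longrightarrow> x \<in> V \<Longrightarrow> walk E x p k \<Longrightarrow> p \<in> V"
  by (induction k arbitrary: x) (auto simp: simple_graph_def)

lemma gdist0: "walk E a b n \<Longrightarrow> gdist E a b = 0 \<Longrightarrow> a = b"
  using gdist_walk[of E a b n] by simp

lemma cwalkS: "u \<in> V \<Longrightarrow> v \<in> V \<Longrightarrow> walk (corona_E V E) (Some u) (Some v) 2"
  by (auto simp: numeral_2_eq_2 intro: exI[of _ None])

lemma cwalkex: "a \<in> corona_V V \<Longrightarrow> b \<in> corona_V V \<Longrightarrow> \<exists>n. n \<le> 2 \<and> walk (corona_E V E) a b n"
proof (cases "a = b")
  case True then show ?thesis by (intro exI[of _ 0]) auto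
next
  case False
  assume a: "a \<in> corona_V V" and b: "b \<in> corona_V V"
  show ?thesis
  proof (cases a)
    case None
    then obtain v where "b = Some v" "v \<in> V" using b False by (auto simp: corona_V_def)
    then show ?thesis using None by (intro exI[of _ 1]) auto
  next
    case (Some u)
    then have u: "u \<in> V" using a by (auto simp: corona_V_def)
    show ?thesis
    proof (cases b)
      case None then show ?thesis using Some u by (intro exI[of _ 1]) auto
    next
      case (Some v)
      then have "v \<in> V" using b by (auto simp: corona_V_def)
      then show ?thesis using Some \<open>a = Some u\<close> u cwalkS by (intro exI[of _ 2]) auto
    qed
  qed
qed

lemma cwalk2: "a \<in> corona_V V \<Longrightarrow> b \<in> corona_V V \<Longrightarrow> gdist (corona_E V E) a b \<le> 2"
  using cwalkex gdist_le by (metis order_trans)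

lemma cgdist0: "a \<in> corona_V V \<Longrightarrow> b \<in> corona_V V \<Longrightarrow> gdist (corona_E V E) a b = 0 \<Longrightarrow> a = b"
  using cwalkex gdist0 by metis

lemma bad_corona:
  assumes sg: "simple_graph V E" and u: "u \<in> V" and v: "v \<in> V" and uv: "u \<noteq> v" and ne: "\<not> E u v"
  shows "bad (sr_win (corona_V V) (corona_E V E)) (Some u) (Some v)"
proof -
  let ?V = "corona_V V" and ?E = "corona_E V E"
  have ne2: "\<not> E v u" using sg ne unfolding simple_graph_def by blast
  have inV: "Some u \<in> ?V" "Some v \<in> ?V" using u v by (auto simp: corona_V_def)
  have d2: "gdist ?E (Some a) (Some b) = 2" if "a \<noteq> b" "\<not> E a b" "a \<in> V" "b \<in> V" for a b
  proof -
    have w: "walk ?E (Some a) (Some b) 2" using cwalkS[OF that(3) that(4)] .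
    have le: "gdist ?E (Some a) (Some b) \<le> 2" using gdist_le[OF w] .
    have ww: "walk ?E (Some a) (Some b) (gdist ?E (Some a) (Some b))" using gdist_walk[OF w] .
    have "gdist ?E (Some a) (Some b) \<noteq> 0" using gdist0[OF w] that by auto
    moreover have "gdist ?E (Some a) (Some b) \<noteq> 1" 
    proof
      assume "gdist ?E (Some a) (Some b) = 1"
      with ww have "walk ?E (Some a) (Some b) (Suc 0)" by simp
      then show False using that by simp
    qed
    ultimately show ?thesis using le by linarith
  qed
  have key: "z = Some a" if "a \<noteq> b" "\<not> E a b" "a \<in> V" "b \<in> V" "z \<in> ?V"
     "on_geodesic ?E (Some b) (Some a) z" for a b z
  proof -
    have "gdist ?E (Some b) (Some a) = 2" using d2[of b a] that sg unfolding simple_graph_def by auto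
    moreover have "gdist ?E (Some b) z \<le> 2" by (rule cwalk2) (use that in \<open>auto simp: corona_V_def\<close>)
    ultimately have "gdist ?E (Some a) z = 0" using that(6) unfolding on_geodesic_def by linarith
    then show ?thesis using cgdist0[of "Some a" V z E] that by (auto simp: corona_V_def)
  qed
  show ?thesis unfolding bad_def sr_win_def
  proof (intro allI impI)
    fix M assume "\<exists>S\<subseteq>M. strong_resolving ?V ?E S"
    then obtain S where S: "S \<subseteq> M" "strong_resolving ?V ?E S" by blast
    then obtain z where z: "z \<in> S" "on_geodesic ?E (Some v) (Some u) z \<or> on_geodesic ?E (Some u) (Some v) z"
      using inV uv unfolding strong_resolving_def by blast
    have zV: "z \<in> ?V" using S z unfolding strong_resolving_def by blast
    from z(2) show "Some u \<in> M \<or> Some v \<in> M"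
    proof
      assume "on_geodesic ?E (Some v) (Some u) z"
      then have "z = Some u" using key[of u v z] uv ne u v zV by blast
      then show ?thesis using z S by blast
    next
      assume "on_geodesic ?E (Some u) (Some v) z"
      then have "z = Some v" using key[of v u z] uv ne2 u v zV by blast
      then show ?thesis using z S by blast
    qed
  qed
qed

lemma bad_complete:
  assumes comp: "\<forall>u\<in>V. \<forall>v\<in>V. u \<noteq> v \<longrightarrow> E u v"
    and a: "a \<in> corona_V V" and b: "b \<in> corona_V V" and ab: "a \<noteq> b"
  shows "bad (sr_win (corona_V V) (corona_E V E)) a b"
proof -
  let ?V = "corona_V V" and ?E = "corona_E V E"
  have w1: "walk ?E p q 1" if "p \<in> ?V" "q \<in> ?V" "p \<noteq> q" for p q
    using that comp by (cases p; cases q) (auto simp: corona_V_def)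
  have d1: "gdist ?E p q \<le> 1" if "p \<in> ?V" "q \<in> ?V" for p q
  proof (cases "p = q")
    case True then show ?thesis using gdist_le[of ?E p q 0] by simp
  next
    case False then show ?thesis using gdist_le w1 that by metis
  qed
  have key: "z = p" if "p \<in> ?V" "q \<in> ?V" "p \<noteq> q" "z \<in> ?V" "on_geodesic ?E q p z" for p q z
  proof -
    have "gdist ?E q p \<noteq> 0" using cgdist0[of q V p E] that by metis
    then have "gdist ?E p z = 0" using d1[of q z] that unfolding on_geodesic_def by linarith
    then show ?thesis using cgdist0[of p V z E] that by metis
  qed
  show ?thesis unfolding bad_def sr_win_def
  proof (intro allI impI)
    fix M assume "\<exists>S\<subseteq>M. strong_resolving ?V ?E S"
    then obtain S where S: "S \<subseteq> M" "strong_resolving ?V ?E S" by blast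
    then obtain z where z: "z \<in> S" "on_geodesic ?E b a z \<or> on_geodesic ?E a b z"
      using a b ab unfolding strong_resolving_def by blast
    have zV: "z \<in> ?V" using S z unfolding strong_resolving_def by blast
    from z(2) show "a \<in> M \<or> b \<in> M"
    proof
      assume "on_geodesic ?E b a z"
      then have "z = a" using key[of a b z] a b ab zV by blast
      then show ?thesis using z S by blast
    next
      assume "on_geodesic ?E a b z"
      then have "z = b" using key[of b a z] a b ab zV by blast
      then show ?thesis using z S by blast
    qed
  qed
qed


lemma conn_walk: "connected_graph V E \<Longrightarrow> x \<in> V \<Longrightarrow> y \<in> V \<Longrightarrow> walk E x y (gdist E x y)"
  unfolding connected_graph_def using gdist_walk by metis

lemma diam_ge:
  assumes "connected_graph V E" "x \<in> V" "y \<in> V"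
  shows "gdist E x y \<le> diam V E"
proof -
  have fin: "finite V" using assms(1) by (simp add: connected_graph_def simple_graph_def)
  have eq: "{gdist E x y | x y. x \<in> V \<and> y \<in> V} = (\<lambda>(x,y). gdist E x y) ` (V \<times> V)" by auto
  show ?thesis unfolding diam_def eq using fin assms by (intro Max_ge) auto
qed

lemma diam_attained:
  assumes "connected_graph V E"
  shows "\<exists>x\<in>V. \<exists>y\<in>V. gdist E x y = diam V E"
proof -
  have fin: "finite V" and ne: "V \<noteq> {}" using assms(1) by (auto simp add: connected_graph_def simple_graph_def)
  have eq: "{gdist E x y | x y. x \<in> V \<and> y \<in> V} = (\<lambda>(x,y). gdist E x y) ` (V \<times> V)" by auto
  have "diam V E \<in> (\<lambda>(x,y). gdist E x y) ` (V \<times> V)" unfolding diam_def eq using fin ne by (intro Max_in) auto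
  then obtain a b where "a \<in> V" "b \<in> V" "diam V E = gdist E a b" by auto
  then show ?thesis by metis
qed

lemma dist_point:
  assumes "connected_graph V E" "x \<in> V" "y \<in> V" "gdist E x y = d" "k \<le> d"
  shows "\<exists>p. walk E x p k \<and> gdist E x p = k"
proof -
  have "walk E x y (k + (d - k))" using conn_walk[OF assms(1-3)] assms(4,5) by simp
  then obtain p where p: "walk E x p k" "walk E p y (d - k)" using walk_split[of E x y k "d - k"] by blast
  have le: "gdist E x p \<le> k" using gdist_le[OF p(1)] .
  have "\<not> gdist E x p < k"
  proof
    assume lt: "gdist E x p < k"
    have "walk E x y (gdist E x p + (d - k))" using walk_append[OF gdist_walk[OF p(1)] p(2)] .
    then have "d \<le> gdist E x p + (d - k)" using gdist_le assms(4) by metis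
    then show False using lt assms(5) by linarith
  qed
  then show ?thesis using le p by (intro exI[of _ p]) auto
qed

lemma nonadj:
  assumes sg: "simple_graph V E" and p: "walk E x p i" and q: "gdist E x q = j" and ij: "i + 2 \<le> j"
  shows "p \<noteq> q \<and> \<not> E p q \<and> \<not> E q p"
proof -
  have "p \<noteq> q" using gdist_le[OF p] q ij by auto
  moreover have "\<not> E p q"
  proof
    assume "E p q"
    then have "walk E p q 1" by simp
    then have "walk E x q (i + 1)" using walk_append[OF p] by blast
    then show False using gdist_le q ij by fastforce
  qed
  moreover then have "\<not> E q p" using sg unfolding simple_graph_def by blast
  ultimately show ?thesis by blast
qed

lemma three:
  assumes "card V \<ge> 3"
  shows "\<exists>u1 u2 u3. u1 \<in> V \<and> u2 \<in> V \<and> u3 \<in> V \<and> u1 \<noteq> u2 \<and> u1 \<noteq> u3 \<and> u2 \<noteq> u3"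
proof -
  obtain A where "A \<subseteq> V" "card A = 3" using assms by (meson obtain_subset_with_card_n)
  then show ?thesis by (auto simp: card_3_iff)
qed

lemma pick:
  assumes "a \<in> A" "b1 \<in> A" "b2 \<in> A" "b3 \<in> A" "a \<noteq> w"
    "b1 \<noteq> b2" "b1 \<noteq> b3" "b2 \<noteq> b3" "a \<noteq> b1" "a \<noteq> b2" "a \<noteq> b3"
    "bad W a b1" "bad W a b2" "bad W a b3"
  shows "\<exists>a b1 b2. a \<in> A - {} - {} - {w} \<and> b1 \<in> A - {} - {} - {w} \<and> b2 \<in> A - {} - {} - {w}
      \<and> b1 \<noteq> b2 \<and> a \<noteq> b1 \<and> a \<noteq> b2 \<and> bad W a b1 \<and> bad W a b2"
proof (cases "w = b1")
  case True then show ?thesis using assms by (intro exI[of _ a] exI[of _ b2] exI[of _ b3]) auto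
next
  case False
  show ?thesis
  proof (cases "w = b2")
    case True then show ?thesis using assms False by (intro exI[of _ a] exI[of _ b1] exI[of _ b3]) auto
  next
    case F2: False
    then show ?thesis using assms False by (intro exI[of _ a] exI[of _ b1] exI[of _ b2]) auto
  qed
qed

theorem mainTheorem12:
  fixes V :: "'a set" and E :: "'a \<Rightarrow> 'a \<Rightarrow> bool"
  assumes "connected_graph V E" and "card V \<ge> 3"
  shows "(diam V E = 1 \<longrightarrow> O_SR (corona_V V) (corona_E V E) = Out_B)
       \<and> (diam V E = 2 \<longrightarrow> O_SR (corona_V V) (corona_E V E) \<in> {Out_M, Out_N, Out_B})
       \<and> (diam V E = 3 \<longrightarrow> O_SR (corona_V V) (corona_E V E) \<in> {Out_N, Out_B})
       \<and> (diam V E \<ge> 4 \<longrightarrow> O_SR (corona_V V) (corona_E V E) = Out_B)"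
proof -
  let ?V = "corona_V V" and ?E = "corona_E V E"
  let ?W = "sr_win ?V ?E"
  let ?mg = "mb_maker_wins ?V ?W {} {} True" and ?bg = "mb_maker_wins ?V ?W {} {} False"
  have conn: "connected_graph V E" by fact
  have sg: "simple_graph V E" using conn by (simp add: connected_graph_def)
  have noneV: "None \<in> ?V" by (simp add: corona_V_def)
  have SomeV: "Some u \<in> ?V" if "u \<in> V" for u using that by (simp add: corona_V_def)
  have outB: "\<not> ?mg \<Longrightarrow> \<not> ?bg \<Longrightarrow> O_SR ?V ?E = Out_B" unfolding O_SR_def Let_def by simp
  have outNB: "\<not> ?bg \<Longrightarrow> O_SR ?V ?E \<in> {Out_N, Out_B}" unfolding O_SR_def Let_def by simp
  have outMNB: "?bg \<longrightarrow> ?mg \<Longrightarrow> O_SR ?V ?E \<in> {Out_M, Out_N, Out_B}" unfolding O_SR_def Let_def by simp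
  have bgfalse: "\<not> ?bg" if "a \<in> ?V" "b1 \<in> ?V" "b2 \<in> ?V" "b1 \<noteq> b2" "a \<noteq> b1" "a \<noteq> b2"
     "bad ?W a b1" "bad ?W a b2" for a b1 b2
    using L4[of ?V ?W "{}" "{}" a b1 b2] that by auto
  have mgfalse: "\<not> ?mg" if "\<And>w. w \<in> ?V - {} - {} \<Longrightarrow> \<exists>a b1 b2. a \<in> ?V - {} - {} - {w} \<and> b1 \<in> ?V - {} - {} - {w} \<and> b2 \<in> ?V - {} - {} - {w}
      \<and> b1 \<noteq> b2 \<and> a \<noteq> b1 \<and> a \<noteq> b2 \<and> bad ?W a b1 \<and> bad ?W a b2"
    using L5[of ?V ?W "{}" "{}", OF _ _ that] noneV by blast
  have monoW: "\<And>A B. ?W A \<Longrightarrow> A \<subseteq> B \<Longrightarrow> ?W B" unfolding sr_win_def by blast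
  have bgmg: "?bg \<longrightarrow> ?mg"
  proof
    assume ?bg
    from mono_win[OF this monoW, where D="{None}"] noneV
    have "mb_maker_wins ?V ?W {None} {} False" by simp
    then show ?mg using noneV by (intro mb_maker_wins.maker_move[of None]) auto
  qed
  obtain x y where xy: "x \<in> V" "y \<in> V" "gdist E x y = diam V E" using diam_attained[OF conn] by blast
  have x0: "walk E x x 0" by simp
  have pV: "p \<in> V" if "walk E x p k" for p k using walk_in_V[OF sg xy(1) that] .
  have partA: "diam V E = 1 \<longrightarrow> O_SR ?V ?E = Out_B"
  proof
    assume d1: "diam V E = 1"
    have comp: "\<forall>u\<in>V. \<forall>v\<in>V. u \<noteq> v \<longrightarrow> E u v"
    proof (intro ballI impI)
      fix u v assume uv: "u \<in> V" "v \<in> V" "u \<noteq> v"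
      have le: "gdist E u v \<le> 1" using diam_ge[OF conn uv(1,2)] d1 by simp
      have w: "walk E u v (gdist E u v)" using conn_walk[OF conn uv(1,2)] .
      show "E u v"
      proof (cases "gdist E u v = 0")
        case True then show ?thesis using w uv by simp
      next
        case False then have "gdist E u v = 1" using le by simp
        then show ?thesis using w by simp
      qed
    qed
    obtain u1 u2 u3 where u: "u1 \<in> V" "u2 \<in> V" "u3 \<in> V" "u1 \<noteq> u2" "u1 \<noteq> u3" "u2 \<noteq> u3"
      using three[OF assms(2)] by blast
    have bd: "bad ?W a b" if "a \<in> ?V" "b \<in> ?V" "a \<noteq> b" for a b
      using bad_complete[OF comp that] .
    have "\<not> ?mg"
    proof (rule mgfalse)
      fix w assume w: "w \<in> ?V - {} - {}"
      show "\<exists>a b1 b2. a \<in> ?V - {} - {} - {w} \<and> b1 \<in> ?V - {} - {} - {w} \<and> b2 \<in> ?V - {} - {} - {w}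
      \<and> b1 \<noteq> b2 \<and> a \<noteq> b1 \<and> a \<noteq> b2 \<and> bad ?W a b1 \<and> bad ?W a b2"
      proof (cases "w = None")
        case True
        show ?thesis using u True SomeV noneV bd
          by (intro pick[of "Some u1" _ "Some u2" "Some u3" None]) auto
      next
        case False
        show ?thesis using u False SomeV noneV bd
          by (intro pick[of None _ "Some u1" "Some u2" "Some u3"]) auto
      qed
    qed
    moreover have "\<not> ?bg" using u SomeV bd by (intro bgfalse[of "Some u1" "Some u2" "Some u3"]) auto
    ultimately show "O_SR ?V ?E = Out_B" using outB by blast
  qed
  have partC: "diam V E = 3 \<longrightarrow> O_SR ?V ?E \<in> {Out_N, Out_B}"
  proof
    assume d3: "diam V E = 3"
    obtain p2 where p2: "walk E x p2 2" "gdist E x p2 = 2" using dist_point[OF conn xy(1,2) xy(3), of 2] d3 by auto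
    obtain p3 where p3: "walk E x p3 3" "gdist E x p3 = 3" using dist_point[OF conn xy(1,2) xy(3), of 3] d3 by auto
    have n2: "x \<noteq> p2 \<and> \<not> E x p2 \<and> \<not> E p2 x" using nonadj[OF sg x0 p2(2)] by simp
    have n3: "x \<noteq> p3 \<and> \<not> E x p3 \<and> \<not> E p3 x" using nonadj[OF sg x0 p3(2)] by simp
    have "p2 \<noteq> p3" using p2 p3 by auto
    then have "\<not> ?bg" using n2 n3 pV[OF p2(1)] pV[OF p3(1)] xy(1) SomeV
      by (intro bgfalse[of "Some x" "Some p2" "Some p3"] bad_corona[OF sg]) auto
    then show "O_SR ?V ?E \<in> {Out_N, Out_B}" using outNB by blast
  qed
  have partD: "diam V E \<ge> 4 \<longrightarrow> O_SR ?V ?E = Out_B"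
  proof
    assume d4: "diam V E \<ge> 4"
    obtain p1 where p1: "walk E x p1 1" "gdist E x p1 = 1" using dist_point[OF conn xy(1,2) xy(3), of 1] d4 by auto
    obtain p2 where p2: "walk E x p2 2" "gdist E x p2 = 2" using dist_point[OF conn xy(1,2) xy(3), of 2] d4 by auto
    obtain p3 where p3: "walk E x p3 3" "gdist E x p3 = 3" using dist_point[OF conn xy(1,2) xy(3), of 3] d4 by auto
    obtain p4 where p4: "walk E x p4 4" "gdist E x p4 = 4" using dist_point[OF conn xy(1,2) xy(3), of 4] d4 by auto
    have n2: "x \<noteq> p2 \<and> \<not> E x p2 \<and> \<not> E p2 x" using nonadj[OF sg x0 p2(2)] by simp
    have n3: "x \<noteq> p3 \<and> \<not> E x p3 \<and> \<not> E p3 x" using nonadj[OF sg x0 p3(2)] by simp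
    have n4: "x \<noteq> p4 \<and> \<not> E x p4 \<and> \<not> E p4 x" using nonadj[OF sg x0 p4(2)] by simp
    have n14: "p1 \<noteq> p4 \<and> \<not> E p1 p4 \<and> \<not> E p4 p1" using nonadj[OF sg p1(1) p4(2)] by simp
    have n24: "p2 \<noteq> p4 \<and> \<not> E p2 p4 \<and> \<not> E p4 p2" using nonadj[OF sg p2(1) p4(2)] by simp
    have dist: "p1 \<noteq> p2" "p2 \<noteq> p3" "p3 \<noteq> p4" "p1 \<noteq> x" using p1 p2 p3 p4 gdist_le[OF x0] by auto
    have inV: "p1 \<in> V" "p2 \<in> V" "p3 \<in> V" "p4 \<in> V" using pV p1 p2 p3 p4 by blast+
    have b2: "bad ?W (Some x) (Some p2)" using n2 inV xy(1) by (intro bad_corona[OF sg]) auto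
    have b3: "bad ?W (Some x) (Some p3)" using n3 inV xy(1) by (intro bad_corona[OF sg]) auto
    have b4: "bad ?W (Some x) (Some p4)" using n4 inV xy(1) by (intro bad_corona[OF sg]) auto
    have b41: "bad ?W (Some p4) (Some p1)" using n14 inV by (intro bad_corona[OF sg]) auto
    have b42: "bad ?W (Some p4) (Some p2)" using n24 inV by (intro bad_corona[OF sg]) auto
    have b40: "bad ?W (Some p4) (Some x)" using n4 inV xy(1) by (intro bad_corona[OF sg]) auto
    have "\<not> ?mg"
    proof (rule mgfalse)
      fix w assume w: "w \<in> ?V - {} - {}"
      show "\<exists>a b1 b2. a \<in> ?V - {} - {} - {w} \<and> b1 \<in> ?V - {} - {} - {w} \<and> b2 \<in> ?V - {} - {} - {w}
      \<and> b1 \<noteq> b2 \<and> a \<noteq> b1 \<and> a \<noteq> b2 \<and> bad ?W a b1 \<and> bad ?W a b2"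
      proof (cases "w = Some x")
        case True
        show ?thesis using True SomeV inV xy(1) b41 b42 b40 n14 n24 n4 n2 dist
          by (intro pick[of "Some p4" _ "Some p1" "Some p2" "Some x"]) auto
      next
        case False
        show ?thesis using False SomeV inV xy(1) b2 b3 b4 n2 n3 n4 n24 dist
          by (intro pick[of "Some x" _ "Some p2" "Some p3" "Some p4"]) auto
      qed
    qed
    moreover have "\<not> ?bg" using SomeV inV xy(1) b2 b3 n2 n3 dist
      by (intro bgfalse[of "Some x" "Some p2" "Some p3"]) auto
    ultimately show "O_SR ?V ?E = Out_B" using outB by blast
  qed
  show ?thesis using partA partC partD outMNB[OF bgmg] by blast
qed

end
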